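(* There exist quantum predictions in the two-superobserver, two-friend extended Wigner's friend scenario that are incompatible with Possibilistic Local Friendliness. Precisely, there exist the following data: - a state $|\Psi\rangle$ on $\mathcal H_A\otimes\mathcal H_B$, where $\mathcal H_A$ (Charlie's laboratory, including his system) contains orthonormal record states $|C_0\rangle,|C_1\rangle$ and $\mathcal H_B$ (Debbie's laboratory) contains orthonormal record states $|D_0\rangle,|D_1\rangle$; - projective measurements $\{A_x(a)\}_{a\in\{0,1\}}$ on $\mathcal H_A$ and $\{B_y(b)\}_{b\in\{0,1\}}$ on $\mathcal H_B$, where $x,y\in\{1,2\}$, and where $A_1$ and $B_1$ are the record-readout measurements ($A_1(0)=|C_0\rangle\langle C_0|$, $A_1(1)=I-|C_0\rangle\langle C_0|$, and similarly for $B_1$ with $|D_0\rangle$). For these data, the possibility set $S=\{(a,b,x,y): \langle\Psi|A_x(a)\otimes B_y(b)|\Psi\rangle>0\}$ admits no Possibilistic Local Friendliness model reproducing it.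
   Context: Scenario. Two space-like separated superobservers, Alice and Bob, have friends Charlie and Debbie respectively. Each friend measures a system inside a sealed laboratory. - Charlie and Debbie record outcomes $C=c\in\{0,1\}$ and $D=d\in\{0,1\}$. - Alice chooses $X=x\in\{1,2\}$ and observes $A=a\in\{0,1\}$. Bob chooses $Y=y\in\{1,2\}$ and observes $B=b\in\{0,1\}$. - Setting $X=1$ means Alice asks Charlie for his result and sets $A=C$. Setting $Y=1$ means Bob asks Debbie and sets $B=D$. - Spacetime relations: $X$ is not in the past light cone of any of $B,Y,C,D$, and $Y$ is not in the past light cone of any of $A,X,C,D$. Possibilistic Local Friendliness (PLF) model for a possibility set $S\subseteq\{0,1\}^2\times\{1,2\}^2$. This is a set $T\subseteq\{0,1\}^4\times\{1,2\}^2$ of possible joint assignments $(a,b,c,d,x,y)$. By Absoluteness of Observed Events, every observed variable, including $C$ and $D$, has a definite value in every run. $T$ must satisfy the following. - Every $t\in T$ with $x=1$ has $a=c$, and every $t\in T$ with $y=1$ has $b=d$. - Possibilistic Local Agency: call a partial assignment $E$ possible if it agrees with some element of $T$. If $E$ is possible, then for any intervention $Z\in\{X,Y\}$ not in the past light cone of any variable assigned in $E$, and for every value $z$, the assignment $E$ together with $Z=z$ is possible. - The projection of $T$ onto $(a,b,x,y)$ equals $S$. *)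

theory Defs
  imports Complex_Main
begin

text \<open>A vector in C^n is a function nat => complex, only the coordinates below n
matter. An operator on C^n is a function nat => nat => complex (matrix entries).
A vector in C^nA tensor C^nB is given by its coefficients Psi i j.\<close>

definition cinner :: "nat \<Rightarrow> (nat \<Rightarrow> complex) \<Rightarrow> (nat \<Rightarrow> complex) \<Rightarrow> complex" where
  "cinner n u v = (\<Sum>i<n. cnj (u i) * v i)"

definition orthonormal2 :: "nat \<Rightarrow> (nat \<Rightarrow> complex) \<Rightarrow> (nat \<Rightarrow> complex) \<Rightarrow> bool" where
  "orthonormal2 n u v \<longleftrightarrow> cinner n u u = 1 \<and> cinner n v v = 1 \<and> cinner n u v = 0"

definition is_projector :: "nat \<Rightarrow> (nat \<Rightarrow> nat \<Rightarrow> complex) \<Rightarrow> bool" where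
  "is_projector n P \<longleftrightarrow>
     (\<forall>i<n. \<forall>j<n. P i j = cnj (P j i)) \<and>
     (\<forall>i<n. \<forall>j<n. (\<Sum>k<n. P i k * P k j) = P i j)"

definition proj_meas :: "nat \<Rightarrow> (nat \<Rightarrow> nat \<Rightarrow> nat \<Rightarrow> complex) \<Rightarrow> bool" where
  "proj_meas n P \<longleftrightarrow> is_projector n (P 0) \<and> is_projector n (P 1) \<and>
     (\<forall>i<n. \<forall>j<n. P 0 i j + P 1 i j = (if i = j then 1 else 0))"

definition unit_state :: "nat \<Rightarrow> nat \<Rightarrow> (nat \<Rightarrow> nat \<Rightarrow> complex) \<Rightarrow> bool" where
  "unit_state nA nB Psi \<longleftrightarrow> (\<Sum>i<nA. \<Sum>j<nB. cnj (Psi i j) * Psi i j) = 1"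

text \<open>\<langle>Psi| P \<otimes> Q |Psi\<rangle>\<close>
definition expect2 :: "nat \<Rightarrow> nat \<Rightarrow> (nat \<Rightarrow> nat \<Rightarrow> complex) \<Rightarrow>
     (nat \<Rightarrow> nat \<Rightarrow> complex) \<Rightarrow> (nat \<Rightarrow> nat \<Rightarrow> complex) \<Rightarrow> complex" where
  "expect2 nA nB Psi P Q =
     (\<Sum>i<nA. \<Sum>j<nB. \<Sum>k<nA. \<Sum>l<nB. cnj (Psi i j) * P i k * Q j l * Psi k l)"

definition readout :: "nat \<Rightarrow> (nat \<Rightarrow> complex) \<Rightarrow> (nat \<Rightarrow> nat \<Rightarrow> nat \<Rightarrow> complex) \<Rightarrow> bool" where
  "readout n v P \<longleftrightarrow> (\<forall>i<n. \<forall>j<n. P 0 i j = v i * cnj (v j) \<and>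
                         P 1 i j = (if i = j then 1 else 0) - v i * cnj (v j))"

definition possibility_set :: "nat \<Rightarrow> nat \<Rightarrow> (nat \<Rightarrow> nat \<Rightarrow> complex) \<Rightarrow>
    (nat \<Rightarrow> nat \<Rightarrow> nat \<Rightarrow> nat \<Rightarrow> complex) \<Rightarrow> (nat \<Rightarrow> nat \<Rightarrow> nat \<Rightarrow> nat \<Rightarrow> complex) \<Rightarrow>
    (nat \<times> nat \<times> nat \<times> nat) set" where
  "possibility_set nA nB Psi A B =
     {(a, b, x, y). a \<in> {0,1} \<and> b \<in> {0,1} \<and> x \<in> {1,2} \<and> y \<in> {1,2} \<and>
        Re (expect2 nA nB Psi (A x a) (B y b)) > 0}"

datatype var = VA | VB | VC | VD | VX | VY

type_synonym run = "nat \<times> nat \<times> nat \<times> nat \<times> nat \<times> nat"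

fun val :: "var \<Rightarrow> run \<Rightarrow> nat" where
  "val VA (a,b,c,d,x,y) = a"
| "val VB (a,b,c,d,x,y) = b"
| "val VC (a,b,c,d,x,y) = c"
| "val VD (a,b,c,d,x,y) = d"
| "val VX (a,b,c,d,x,y) = x"
| "val VY (a,b,c,d,x,y) = y"

definition possible :: "run set \<Rightarrow> (var \<Rightarrow> nat option) \<Rightarrow> bool" where
  "possible T E \<longleftrightarrow> (\<exists>t\<in>T. \<forall>v w. E v = Some w \<longrightarrow> val v t = w)"

text \<open>Variables in whose past light cone the intervention lies is NOT:
X is not in the past light cone of B,Y,C,D; Y is not in that of A,X,C,D.\<close>
definition not_cause_of :: "var \<Rightarrow> var set" where
  "not_cause_of Z = (if Z = VX then {VB, VY, VC, VD} else if Z = VY then {VA, VX, VC, VD} else {})"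

definition PLF_model :: "(nat \<times> nat \<times> nat \<times> nat) set \<Rightarrow> run set \<Rightarrow> bool" where
  "PLF_model S T \<longleftrightarrow>
     T \<subseteq> {(a,b,c,d,x,y). a \<in> {0,1} \<and> b \<in> {0,1} \<and> c \<in> {0,1} \<and> d \<in> {0,1} \<and>
                          x \<in> {1,2} \<and> y \<in> {1,2}} \<and>
     (\<forall>(a,b,c,d,x,y)\<in>T. x = 1 \<longrightarrow> a = c) \<and>
     (\<forall>(a,b,c,d,x,y)\<in>T. y = 1 \<longrightarrow> b = d) \<and>
     (\<forall>E Z z. possible T E \<and> Z \<in> {VX, VY} \<and> dom E \<subseteq> not_cause_of Z \<and> z \<in> {1,2}
          \<longrightarrow> possible T (E(Z \<mapsto> z))) \<and>
     (\<lambda>(a,b,c,d,x,y). (a,b,x,y)) ` T = S"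

end

theory Submission
  imports Defs
begin

definition hPsi :: "nat \<Rightarrow> nat \<Rightarrow> complex" where
  "hPsi i j = (if i = 0 \<and> j = 0 then 4/15 else if i = 0 \<and> j = 1 then 8/15
     else if i = 1 \<and> j = 0 then 8/15 else if i = 1 \<and> j = 1 then -9/15 else 0)"

definition he0 :: "nat \<Rightarrow> complex" where "he0 i = (if i = 0 then 1 else 0)"
definition he1 :: "nat \<Rightarrow> complex" where "he1 i = (if i = 1 then 1 else 0)"

definition hM :: "nat \<Rightarrow> nat \<Rightarrow> nat \<Rightarrow> nat \<Rightarrow> complex" where
  "hM x a i j = (if x = 1 then
       (if a = 0 then he0 i * cnj (he0 j) else (if i = j then 1 else 0) - he0 i * cnj (he0 j))
     else
       (if a = 0 then (if i = 0 \<and> j = 0 then 1/5 else if i = 1 \<and> j = 1 then 4/5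
                       else if i \<le> 1 \<and> j \<le> 1 then 2/5 else 0)
        else (if i = 0 \<and> j = 0 then 4/5 else if i = 1 \<and> j = 1 then 1/5
                       else if i \<le> 1 \<and> j \<le> 1 then -2/5 else 0)))"

lemma less2: "(\<forall>i<(2::nat). P i) \<longleftrightarrow> P 0 \<and> P 1"
  by (auto simp: less_2_cases_iff)

lemma sum2: "(\<Sum>i<(2::nat). f i) = f 0 + f 1"
  by (simp add: numeral_2_eq_2)

lemma unit: "unit_state 2 2 hPsi"
  by (simp add: unit_state_def sum2 hPsi_def)

lemma orth: "orthonormal2 2 he0 he1"
  by (simp add: orthonormal2_def cinner_def sum2 he0_def he1_def)

lemma pm: "x \<in> {1,2} \<Longrightarrow> proj_meas 2 (hM x)"
  by (auto simp: proj_meas_def is_projector_def less2 sum2 hM_def he0_def)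

lemma ro: "readout 2 he0 (hM 1)"
  by (simp add: readout_def hM_def)

lemma e1: "Re (expect2 2 2 hPsi (hM 1 0) (hM 1 0)) > 0"
  by (simp add: expect2_def sum2 hM_def hPsi_def he0_def)
lemma e2: "Re (expect2 2 2 hPsi (hM 1 0) (hM 2 1)) = 0"
  by (simp add: expect2_def sum2 hM_def hPsi_def he0_def)
lemma e3: "Re (expect2 2 2 hPsi (hM 2 1) (hM 1 0)) = 0"
  by (simp add: expect2_def sum2 hM_def hPsi_def he0_def)
lemma e4: "Re (expect2 2 2 hPsi (hM 2 0) (hM 2 0)) = 0"
  by (simp add: expect2_def sum2 hM_def hPsi_def he0_def)

lemma possE:
  assumes "possible T E"
  obtains t where "t \<in> T" "\<And>v w. E v = Some w \<Longrightarrow> val v t = w"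
  using assms unfolding possible_def by blast

lemma noPLF:
  assumes S: "\<And>a b x y. (a,b,x,y) \<in> S \<Longrightarrow> (a,b,x,y) \<noteq> (0,1,1,2) \<and> (a,b,x,y) \<noteq> (1,0,2,1) \<and> (a,b,x,y) \<noteq> (0,0,2,2)"
    and S1: "(0,0,1,1) \<in> S"
  shows "\<not> PLF_model S T"
proof
  assume P: "PLF_model S T"
  have Tsub: "T \<subseteq> {(a,b,c,d,x,y). a \<in> {0,1} \<and> b \<in> {0,1} \<and> c \<in> {0,1} \<and> d \<in> {0,1} \<and>
                          x \<in> {1,2} \<and> y \<in> {1,2}}"
   and X1: "\<forall>(a,b,c,d,x,y)\<in>T. x = 1 \<longrightarrow> a = c"
   and Y1: "\<forall>(a,b,c,d,x,y)\<in>T. y = 1 \<longrightarrow> b = d"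
   and LA: "\<forall>E Z z. possible T E \<and> Z \<in> {VX, VY} \<and> dom E \<subseteq> not_cause_of Z \<and> z \<in> {1,2}
          \<longrightarrow> possible T (E(Z \<mapsto> z))"
   and PR: "(\<lambda>(a,b,c,d,x,y). (a,b,x,y)) ` T = S"
    using P unfolding PLF_model_def by blast+
  have inS: "(a,b,x,y) \<in> S" if "(a,b,c,d,x,y) \<in> T" for a b c d x y
    using PR that by force
  obtain c d where t1: "(0,0,c,d,1,1) \<in> T" using S1 PR by force
  with X1 Y1 have cd: "c = 0" "d = 0" by auto
  have "possible T [VC \<mapsto> 0, VD \<mapsto> 0]"
    unfolding possible_def using t1 cd by (intro bexI[of _ "(0,0,c,d,1,1)"]) auto
  then have "possible T [VC \<mapsto> 0, VD \<mapsto> 0, VX \<mapsto> 2]"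
    using LA[rule_format, of "[VC \<mapsto> 0, VD \<mapsto> 0]" VX 2] by (auto simp: not_cause_of_def)
  then have "possible T [VC \<mapsto> 0, VD \<mapsto> 0, VX \<mapsto> 2, VY \<mapsto> 2]"
    using LA[rule_format, of "[VC \<mapsto> 0, VD \<mapsto> 0, VX \<mapsto> 2]" VY 2] by (auto simp: not_cause_of_def)
  then obtain t where tT: "t \<in> T" and tv: "\<And>v w. [VC \<mapsto> 0, VD \<mapsto> 0, VX \<mapsto> 2, VY \<mapsto> 2] v = Some w \<Longrightarrow> val v t = w"
    by (elim possE) blast
  obtain a b c' d' x' y' where teq: "t = (a,b,c',d',x',y')" by (cases t)
  have "c' = 0" using tv[of VC 0] teq by simp
  moreover have "d' = 0" using tv[of VD 0] teq by simp
  moreover have "x' = 2" using tv[of VX 2] teq by simp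
  moreover have "y' = 2" using tv[of VY 2] teq by simp
  ultimately have t2: "(a,b,0,0,2,2) \<in> T" using tT teq by simp
  have "possible T [VA \<mapsto> a, VX \<mapsto> 2, VC \<mapsto> 0, VD \<mapsto> 0]"
    unfolding possible_def using t2 by (intro bexI[of _ "(a,b,0,0,2,2)"]) auto
  then have "possible T [VA \<mapsto> a, VX \<mapsto> 2, VC \<mapsto> 0, VD \<mapsto> 0, VY \<mapsto> 1]"
    using LA[rule_format, of "[VA \<mapsto> a, VX \<mapsto> 2, VC \<mapsto> 0, VD \<mapsto> 0]" VY 1] by (auto simp: not_cause_of_def)
  then obtain t' where tT': "t' \<in> T" and tv': "\<And>v w. [VA \<mapsto> a, VX \<mapsto> 2, VC \<mapsto> 0, VD \<mapsto> 0, VY \<mapsto> 1] v = Some w \<Longrightarrow> val v t' = w"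
    by (elim possE) blast
  obtain a2 b' c2 d2 x2 y2 where teq': "t' = (a2,b',c2,d2,x2,y2)" by (cases t')
  have "a2 = a" using tv'[of VA a] teq' by simp
  moreover have "c2 = 0" using tv'[of VC 0] teq' by simp
  moreover have "d2 = 0" using tv'[of VD 0] teq' by simp
  moreover have "x2 = 2" using tv'[of VX 2] teq' by simp
  moreover have "y2 = 1" using tv'[of VY 1] teq' by simp
  ultimately have t3: "(a,b',0,0,2,1) \<in> T" using tT' teq' by simp
  with Y1 have "b' = 0" by auto
  with t3 have "(a,0,2,1) \<in> S" using inS by blast
  with S have a1: "a \<noteq> 1" by blast
  have "possible T [VB \<mapsto> b, VY \<mapsto> 2, VC \<mapsto> 0, VD \<mapsto> 0]"
    unfolding possible_def using t2 by (intro bexI[of _ "(a,b,0,0,2,2)"]) auto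
  then have "possible T [VB \<mapsto> b, VY \<mapsto> 2, VC \<mapsto> 0, VD \<mapsto> 0, VX \<mapsto> 1]"
    using LA[rule_format, of "[VB \<mapsto> b, VY \<mapsto> 2, VC \<mapsto> 0, VD \<mapsto> 0]" VX 1] by (auto simp: not_cause_of_def)
  then obtain t'' where tT'': "t'' \<in> T" and tv'': "\<And>v w. [VB \<mapsto> b, VY \<mapsto> 2, VC \<mapsto> 0, VD \<mapsto> 0, VX \<mapsto> 1] v = Some w \<Longrightarrow> val v t'' = w"
    by (elim possE) blast
  obtain a' b3 c3 d3 x3 y3 where teq'': "t'' = (a',b3,c3,d3,x3,y3)" by (cases t'')
  have "b3 = b" using tv''[of VB b] teq'' by simp
  moreover have "c3 = 0" using tv''[of VC 0] teq'' by simp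
  moreover have "d3 = 0" using tv''[of VD 0] teq'' by simp
  moreover have "x3 = 1" using tv''[of VX 1] teq'' by simp
  moreover have "y3 = 2" using tv''[of VY 2] teq'' by simp
  ultimately have t4: "(a',b,0,0,1,2) \<in> T" using tT'' teq'' by simp
  with X1 have "a' = 0" by auto
  with t4 have "(0,b,1,2) \<in> S" using inS by blast
  with S have b1: "b \<noteq> 1" by blast
  have "a \<in> {0,1}" "b \<in> {0,1}" using t2 Tsub by auto
  with a1 b1 have "a = 0" "b = 0" by auto
  with t2 inS S show False by blast
qed

theorem theorem5:
  shows "\<exists>(nA::nat) (nB::nat) (Psi::nat \<Rightarrow> nat \<Rightarrow> complex)
            (C0::nat \<Rightarrow> complex) C1 (D0::nat \<Rightarrow> complex) D1
            (A::nat \<Rightarrow> nat \<Rightarrow> nat \<Rightarrow> nat \<Rightarrow> complex) (B::nat \<Rightarrow> nat \<Rightarrow> nat \<Rightarrow> nat \<Rightarrow> complex).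
     unit_state nA nB Psi \<and>
     orthonormal2 nA C0 C1 \<and> orthonormal2 nB D0 D1 \<and>
     (\<forall>x\<in>{1,2}. proj_meas nA (A x)) \<and> (\<forall>y\<in>{1,2}. proj_meas nB (B y)) \<and>
     readout nA C0 (A 1) \<and> readout nB D0 (B 1) \<and>
     \<not> (\<exists>T. PLF_model (possibility_set nA nB Psi A B) T)"
proof -
  have "\<not> PLF_model (possibility_set 2 2 hPsi hM hM) T" for T
  proof (rule noPLF)
    fix a b x y
    assume "(a,b,x,y) \<in> possibility_set 2 2 hPsi hM hM"
    then have "Re (expect2 2 2 hPsi (hM x a) (hM y b)) > 0"
      by (simp add: possibility_set_def)
    then show "(a,b,x,y) \<noteq> (0,1,1,2) \<and> (a,b,x,y) \<noteq> (1,0,2,1) \<and> (a,b,x,y) \<noteq> (0,0,2,2)"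
      using e2 e3 e4 by auto
  next
    show "(0,0,1,1) \<in> possibility_set 2 2 hPsi hM hM"
      using e1 by (simp add: possibility_set_def)
  qed
  then show ?thesis using unit orth pm ro by blast
qed

end
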